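(* Let $f,f_0$ be probability densities on $[0,1]$ with $f_0$ bounded. Let $g\in L^\infty[0,1]$ and $C_1,C_2>0$ be such that $h(f,f_0)\|g\|_\infty\le C_1$ and $\|g\|_2\le C_2$. Then $$\Big|\int_0^1g^2(f-f_0)\Big|\le C_1^2+C_1\sqrt{4C_2^2\|f_0\|_\infty+C_1^2}.$$
   Context: $h$ is the Hellinger distance, $h(f,f_0)^2=\int_0^1(\sqrt f-\sqrt{f_0})^2$. $\|\cdot\|_2$ and $\|\cdot\|_\infty$ are the $L^2[0,1]$ and sup norms. *)

theory Defs
  imports "HOL-Analysis.Analysis"
begin

definition prob_density01 :: "(real \<Rightarrow> real) \<Rightarrow> bool" where
  "prob_density01 f \<longleftrightarrow> f \<in> borel_measurable lborel \<and> (\<forall>x\<in>{0..1}. 0 \<le> f x)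
     \<and> set_integrable lborel {0..1} f \<and> (LINT x:{0..1}|lborel. f x) = 1"

definition hellinger :: "(real \<Rightarrow> real) \<Rightarrow> (real \<Rightarrow> real) \<Rightarrow> real" where
  "hellinger f f0 = sqrt (LINT x:{0..1}|lborel. (sqrt (f x) - sqrt (f0 x))^2)"

definition sup_norm01 :: "(real \<Rightarrow> real) \<Rightarrow> real" where
  "sup_norm01 g = (SUP x\<in>{0..1}. \<bar>g x\<bar>)"

definition L2_norm01 :: "(real \<Rightarrow> real) \<Rightarrow> real" where
  "L2_norm01 g = sqrt (LINT x:{0..1}|lborel. (g x)^2)"

end

theory Submission
  imports Defs
begin

theorem lemma6:
  fixes f f0 g :: "real \<Rightarrow> real" and C1 C2 :: real
  assumes "prob_density01 f" and "prob_density01 f0"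
    and "bdd_above ((\<lambda>x. \<bar>f0 x\<bar>) ` {0..1})"
    and "g \<in> borel_measurable lborel"
    and "bdd_above ((\<lambda>x. \<bar>g x\<bar>) ` {0..1})"
    and "C1 > 0" and "C2 > 0"
    and "hellinger f f0 * sup_norm01 g \<le> C1"
    and "L2_norm01 g \<le> C2"
  shows "\<bar>LINT x:{0..1}|lborel. (g x)^2 * (f x - f0 x)\<bar>
           \<le> C1^2 + C1 * sqrt (4 * C2^2 * sup_norm01 f0 + C1^2)"
proof -
  define S :: "real set" where "S = {0..1}"
  define G where "G = sup_norm01 g"
  define F where "F = sup_norm01 f0"
  define H where "H = hellinger f f0"
  define i :: "real \<Rightarrow> real" where "i = indicator S"
  have fm[measurable]: "f \<in> borel_measurable lborel" and f0m[measurable]: "f0 \<in> borel_measurable lborel"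
    using assms(1,2) by (auto simp: prob_density01_def)
  have gm[measurable]: "g \<in> borel_measurable lborel" by fact
  have im[measurable]: "i \<in> borel_measurable lborel" unfolding i_def S_def by measurable
  have fpos: "\<And>x. x \<in> S \<Longrightarrow> 0 \<le> f x" and f0pos: "\<And>x. x \<in> S \<Longrightarrow> 0 \<le> f0 x"
    using assms(1,2) by (auto simp: prob_density01_def S_def)
  have If: "integrable lborel (\<lambda>x. i x * f x)" and If0: "integrable lborel (\<lambda>x. i x * f0 x)"
    using assms(1,2) by (auto simp: prob_density01_def set_integrable_def i_def S_def)
  have int1: "lebesgue_integral lborel (\<lambda>x. i x * f0 x) = 1"
    using assms(2) by (auto simp: prob_density01_def set_lebesgue_integral_def i_def S_def)
  have hG: "\<And>x. x \<in> S \<Longrightarrow> \<bar>g x\<bar> \<le> G"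
    unfolding G_def sup_norm01_def S_def using assms(5) by (auto intro: cSUP_upper)
  have hF: "\<And>x. x \<in> S \<Longrightarrow> \<bar>f0 x\<bar> \<le> F"
    unfolding F_def sup_norm01_def S_def using assms(3) by (auto intro: cSUP_upper)
  have G0: "0 \<le> G" using hG[of 0] by (auto simp: S_def)
  have F0: "0 \<le> F" using hF[of 0] by (auto simp: S_def)
  have hG2: "\<And>x. x \<in> S \<Longrightarrow> (g x)^2 \<le> G^2"
    using hG by (metis abs_ge_zero power2_abs power_mono)
  have i01: "\<And>x. i x = 0 \<or> (i x = 1 \<and> x \<in> S)" by (auto simp: i_def indicator_def)
  define a where "a x = sqrt (f x) - sqrt (f0 x)" for x
  have am[measurable]: "a \<in> borel_measurable lborel" unfolding a_def by measurable
  have a2le: "\<And>x. x \<in> S \<Longrightarrow> (a x)^2 \<le> f x + f0 x"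
  proof -
    fix x assume "x \<in> S"
    hence "0 \<le> f x" "0 \<le> f0 x" using fpos f0pos by auto
    thus "(a x)^2 \<le> f x + f0 x" unfolding a_def
      by (simp add: power2_diff real_sqrt_mult[symmetric])
  qed
  have Ia: "integrable lborel (\<lambda>x. i x * (a x)^2)"
  proof (rule Bochner_Integration.integrable_bound[OF Bochner_Integration.integrable_add[OF If If0]])
    show "(\<lambda>x. i x * (a x)^2) \<in> borel_measurable lborel" by measurable
    show "AE x in lborel. norm (i x * (a x)^2) \<le> norm (i x * f x + i x * f0 x)"
    proof (intro AE_I2)
      fix x
      show "norm (i x * (a x)^2) \<le> norm (i x * f x + i x * f0 x)"
      proof (cases "i x = 0")
        case False
        hence "i x = 1" "x \<in> S" using i01 by auto
        thus ?thesis using a2le[of x] fpos[of x] f0pos[of x] by simp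
      qed simp
    qed
  qed
  have IS: "integrable lborel i" unfolding i_def S_def by (intro integrable_real_indicator) auto
  have Ig2: "integrable lborel (\<lambda>x. i x * (g x)^2)"
  proof (rule Bochner_Integration.integrable_bound[OF Bochner_Integration.integrable_mult_right[where c="G^2", OF IS]])
    show "(\<lambda>x. i x * (g x)^2) \<in> borel_measurable lborel" by measurable
    show "AE x in lborel. norm (i x * (g x)^2) \<le> norm (G^2 * i x)"
    proof (intro AE_I2)
      fix x
      show "norm (i x * (g x)^2) \<le> norm (G^2 * i x)"
      proof (cases "i x = 0")
        case False
        hence "i x = 1" "x \<in> S" using i01 by auto
        thus ?thesis using hG2[of x] by simp
      qed simp
    qed
  qed
  have Iga: "integrable lborel (\<lambda>x. i x * ((g x)^2 * (a x)^2))"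
  proof (rule Bochner_Integration.integrable_bound[OF Bochner_Integration.integrable_mult_right[where c="G^2", OF Ia]])
    show "(\<lambda>x. i x * ((g x)^2 * (a x)^2)) \<in> borel_measurable lborel" by measurable
    show "AE x in lborel. norm (i x * ((g x)^2 * (a x)^2)) \<le> norm (G^2 * (i x * (a x)^2))"
    proof (intro AE_I2)
      fix x
      show "norm (i x * ((g x)^2 * (a x)^2)) \<le> norm (G^2 * (i x * (a x)^2))"
      proof (cases "i x = 0")
        case False
        hence "i x = 1" "x \<in> S" using i01 by auto
        thus ?thesis using hG2[of x] by (simp add: mult_right_mono)
      qed simp
    qed
  qed
  have Igf0: "integrable lborel (\<lambda>x. i x * ((g x)^2 * f0 x))"
  proof (rule Bochner_Integration.integrable_bound[OF Bochner_Integration.integrable_mult_right[where c="G^2", OF If0]])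
    show "(\<lambda>x. i x * ((g x)^2 * f0 x)) \<in> borel_measurable lborel" by measurable
    show "AE x in lborel. norm (i x * ((g x)^2 * f0 x)) \<le> norm (G^2 * (i x * f0 x))"
    proof (intro AE_I2)
      fix x
      show "norm (i x * ((g x)^2 * f0 x)) \<le> norm (G^2 * (i x * f0 x))"
      proof (cases "i x = 0")
        case False
        hence "i x = 1" "x \<in> S" using i01 by auto
        thus ?thesis using hG2[of x] f0pos[of x] by (simp add: mult_right_mono)
      qed simp
    qed
  qed
  have Ig: "integrable lborel (\<lambda>x. i x * ((g x)^2 * (f x - f0 x)))"
  proof (rule Bochner_Integration.integrable_bound[OF Bochner_Integration.integrable_mult_right[where c="G^2", OF Bochner_Integration.integrable_add[OF If If0]]])
    show "(\<lambda>x. i x * ((g x)^2 * (f x - f0 x))) \<in> borel_measurable lborel" by measurable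
    show "AE x in lborel. norm (i x * ((g x)^2 * (f x - f0 x))) \<le> norm (G^2 * (i x * f x + i x * f0 x))"
    proof (intro AE_I2)
      fix x
      show "norm (i x * ((g x)^2 * (f x - f0 x))) \<le> norm (G^2 * (i x * f x + i x * f0 x))"
      proof (cases "i x = 0")
        case False
        hence "i x = 1" "x \<in> S" using i01 by auto
        moreover have "\<bar>f x - f0 x\<bar> \<le> f x + f0 x" using fpos[of x] f0pos[of x] \<open>x \<in> S\<close> by linarith
        ultimately show ?thesis using hG2[of x]
          by (simp add: abs_mult) (metis mult_mono zero_le_power2 abs_ge_zero)
      qed simp
    qed
  qed

  have Hsq: "H^2 = lebesgue_integral lborel (\<lambda>x. i x * (a x)^2)"
  proof -
    have "0 \<le> lebesgue_integral lborel (\<lambda>x. i x * (a x)^2)"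
      by (rule integral_nonneg_AE) (auto simp: i_def indicator_def)
    moreover have "H = sqrt (lebesgue_integral lborel (\<lambda>x. i x * (a x)^2))"
      by (simp add: H_def hellinger_def set_lebesgue_integral_def i_def S_def a_def)
    ultimately show ?thesis by simp
  qed
  have H0: "0 \<le> H"
  proof -
    have "0 \<le> lebesgue_integral lborel (\<lambda>x. i x * (a x)^2)"
      by (rule integral_nonneg_AE) (auto simp: i_def indicator_def)
    moreover have "H = sqrt (lebesgue_integral lborel (\<lambda>x. i x * (a x)^2))"
      by (simp add: H_def hellinger_def set_lebesgue_integral_def i_def S_def a_def)
    ultimately show ?thesis by simp
  qed
  have HG: "H^2 * G^2 \<le> C1^2"
  proof -
    have "(H*G)^2 \<le> C1^2" using assms(8) H0 G0 unfolding H_def G_def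
      by (intro power_mono) auto
    thus ?thesis by (simp add: power_mult_distrib)
  qed
  have Iga_le: "lebesgue_integral lborel (\<lambda>x. i x * ((g x)^2 * (a x)^2)) \<le> C1^2"
  proof -
    have "lebesgue_integral lborel (\<lambda>x. i x * ((g x)^2 * (a x)^2))
        \<le> lebesgue_integral lborel (\<lambda>x. G^2 * (i x * (a x)^2))"
    proof (rule integral_mono[OF Iga Bochner_Integration.integrable_mult_right[where c="G^2", OF Ia]])
      fix x
      show "i x * ((g x)^2 * (a x)^2) \<le> G^2 * (i x * (a x)^2)"
      proof (cases "i x = 0")
        case False
        hence "i x = 1" "x \<in> S" using i01 by auto
        thus ?thesis using hG2[of x] by (simp add: mult_right_mono)
      qed simp
    qed
    also have "\<dots> = G^2 * H^2" using Hsq by simp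
    finally show ?thesis using HG by (simp add: mult.commute)
  qed
  have L2: "lebesgue_integral lborel (\<lambda>x. i x * (g x)^2) \<le> C2^2"
  proof -
    have nn: "0 \<le> lebesgue_integral lborel (\<lambda>x. i x * (g x)^2)"
      by (rule integral_nonneg_AE) (auto simp: i_def indicator_def)
    have "L2_norm01 g = sqrt (lebesgue_integral lborel (\<lambda>x. i x * (g x)^2))"
      by (simp add: L2_norm01_def set_lebesgue_integral_def i_def S_def)
    hence "sqrt (lebesgue_integral lborel (\<lambda>x. i x * (g x)^2)) \<le> C2" using assms(9) by simp
    hence "(sqrt (lebesgue_integral lborel (\<lambda>x. i x * (g x)^2)))^2 \<le> C2^2"
      using nn by (intro power_mono) auto
    thus ?thesis using nn by simp
  qed
  have Igf0_le: "lebesgue_integral lborel (\<lambda>x. i x * ((g x)^2 * f0 x)) \<le> F * C2^2"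
  proof -
    have "lebesgue_integral lborel (\<lambda>x. i x * ((g x)^2 * f0 x))
        \<le> lebesgue_integral lborel (\<lambda>x. F * (i x * (g x)^2))"
    proof (rule integral_mono[OF Igf0 Bochner_Integration.integrable_mult_right[where c="F", OF Ig2]])
      fix x
      show "i x * ((g x)^2 * f0 x) \<le> F * (i x * (g x)^2)"
      proof (cases "i x = 0")
        case False
        hence "i x = 1" "x \<in> S" using i01 by auto
        thus ?thesis using hF[of x] f0pos[of x]
          by (simp add: mult_right_mono mult.commute)
      qed simp
    qed
    also have "\<dots> \<le> F * C2^2" using L2 F0 by (simp add: mult_left_mono)
    finally show ?thesis .
  qed
  have Fpos: "0 < F"
  proof (rule ccontr)
    assume "\<not> 0 < F"
    hence "\<And>x. x \<in> S \<Longrightarrow> f0 x = 0" using hF f0pos by force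
    hence "\<And>x. i x * f0 x = 0" using i01 by (metis mult_zero_left mult_zero_right)
    hence "(\<lambda>x. i x * f0 x) = (\<lambda>x. 0)" by auto
    hence "lebesgue_integral lborel (\<lambda>x. i x * f0 x) = 0" by simp
    thus False using int1 by simp
  qed
  define t where "t = C2 * sqrt F / C1"
  have tpos: "0 < t" unfolding t_def using assms(6,7) Fpos by simp
  define k where "k x = i x * ((1 + t) * ((g x)^2 * (a x)^2) + (1/t) * ((g x)^2 * f0 x))" for x
  have Ik: "integrable lborel k" unfolding k_def using Iga Igf0
    by (simp add: distrib_left mult.left_commute[of "i _"])
  have pw: "\<bar>i x * ((g x)^2 * (f x - f0 x))\<bar> \<le> k x" for x
  proof (cases "i x = 0")
    case True thus ?thesis by (simp add: k_def)
  next
    case False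
    hence "x \<in> S" "i x = 1" using i01 by auto
    hence fx: "0 \<le> f x" "0 \<le> f0 x" using fpos f0pos by auto
    define b where "b = sqrt (f0 x)"
    have fe: "f x - f0 x = (a x)^2 + 2 * a x * b"
      unfolding a_def b_def using fx by (simp add: power2_diff algebra_simps)
    have "\<bar>2 * a x * b\<bar> \<le> t * (a x)^2 + (1/t) * b^2"
    proof -
      have "0 \<le> (t * \<bar>a x\<bar> - \<bar>b\<bar>)^2" by simp
      hence "2 * t * \<bar>a x\<bar> * \<bar>b\<bar> \<le> t^2 * (a x)^2 + b^2"
        by (simp add: power2_diff power_mult_distrib)
      hence "2 * \<bar>a x\<bar> * \<bar>b\<bar> \<le> (t^2 * (a x)^2 + b^2) / t"
        using tpos by (simp add: field_simps)
      also have "\<dots> = t * (a x)^2 + (1/t) * b^2" using tpos by (simp add: field_simps power2_eq_square)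
      finally show ?thesis by (simp add: abs_mult)
    qed
    moreover have "\<bar>(a x)^2 + 2 * a x * b\<bar> \<le> (a x)^2 + \<bar>2 * a x * b\<bar>"
      using abs_triangle_ineq[of "(a x)^2" "2 * a x * b"] by simp
    moreover have "b^2 = f0 x" unfolding b_def using fx by simp
    ultimately have "\<bar>f x - f0 x\<bar> \<le> (1 + t) * (a x)^2 + (1/t) * f0 x"
      unfolding fe by (simp add: algebra_simps)
    hence "(g x)^2 * \<bar>f x - f0 x\<bar> \<le> (g x)^2 * ((1 + t) * (a x)^2 + (1/t) * f0 x)"
      by (simp add: mult_left_mono)
    moreover have "\<bar>i x * ((g x)^2 * (f x - f0 x))\<bar> = (g x)^2 * \<bar>f x - f0 x\<bar>"
      using \<open>i x = 1\<close> by (simp add: abs_mult)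
    moreover have "k x = (g x)^2 * ((1 + t) * (a x)^2 + (1/t) * f0 x)"
      using \<open>i x = 1\<close> by (simp add: k_def algebra_simps)
    ultimately show ?thesis by simp
  qed
  have kint: "lebesgue_integral lborel k
      = (1 + t) * lebesgue_integral lborel (\<lambda>x. i x * ((g x)^2 * (a x)^2))
        + (1/t) * lebesgue_integral lborel (\<lambda>x. i x * ((g x)^2 * f0 x))"
  proof -
    have "k = (\<lambda>x. (1 + t) * (i x * ((g x)^2 * (a x)^2)) + (1/t) * (i x * ((g x)^2 * f0 x)))"
      by (auto simp: k_def fun_eq_iff algebra_simps)
    thus ?thesis using Iga Igf0 by simp
  qed
  have bnd: "lebesgue_integral lborel k \<le> C1^2 + 2 * C1 * C2 * sqrt F"
  proof -
    have "lebesgue_integral lborel k \<le> (1 + t) * C1^2 + (1/t) * (F * C2^2)"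
      unfolding kint using Iga_le Igf0_le tpos
      by (intro add_mono mult_left_mono) auto
    also have "\<dots> = C1^2 + 2 * C1 * C2 * sqrt F"
    proof -
      have sF: "sqrt F * sqrt F = F" using F0 by simp
      have "t * C1^2 = C1 * C2 * sqrt F" unfolding t_def using assms(6)
        by (simp add: power2_eq_square)
      moreover have "(1/t) * (F * C2^2) = C1 * C2 * sqrt F" unfolding t_def
        using assms(6,7) Fpos sF by (simp add: field_simps power2_eq_square)
      ultimately show ?thesis by (simp add: algebra_simps)
    qed
    finally show ?thesis .
  qed
  have absle: "\<bar>lebesgue_integral lborel (\<lambda>x. i x * ((g x)^2 * (f x - f0 x)))\<bar> \<le> lebesgue_integral lborel k"
  proof -
    have "lebesgue_integral lborel (\<lambda>x. i x * ((g x)^2 * (f x - f0 x))) \<le> lebesgue_integral lborel k"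
      by (rule integral_mono[OF Ig Ik]) (use pw in \<open>auto simp: abs_le_iff\<close>)
    moreover have "- lebesgue_integral lborel (\<lambda>x. i x * ((g x)^2 * (f x - f0 x))) \<le> lebesgue_integral lborel k"
    proof -
      have "lebesgue_integral lborel (\<lambda>x. - (i x * ((g x)^2 * (f x - f0 x)))) \<le> lebesgue_integral lborel k"
        by (rule integral_mono[OF _ Ik]) (use pw Ig in \<open>auto simp: abs_le_iff\<close>)
      thus ?thesis by simp
    qed
    ultimately show ?thesis by linarith
  qed
  have fin: "C1^2 + 2 * C1 * C2 * sqrt F \<le> C1^2 + C1 * sqrt (4 * C2^2 * F + C1^2)"
  proof -
    have "2 * C2 * sqrt F = sqrt (4 * C2^2 * F)" using assms(7) F0
      by (simp add: real_sqrt_mult real_sqrt_abs power2_eq_square[of 2, symmetric])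
    also have "\<dots> \<le> sqrt (4 * C2^2 * F + C1^2)" by simp
    finally have "C1 * (2 * C2 * sqrt F) \<le> C1 * sqrt (4 * C2^2 * F + C1^2)"
      using assms(6) by (simp add: mult_left_mono)
    thus ?thesis by (simp add: algebra_simps)
  qed
  have eq: "(LINT x:{0..1}|lborel. (g x)^2 * (f x - f0 x))
      = lebesgue_integral lborel (\<lambda>x. i x * ((g x)^2 * (f x - f0 x)))"
    by (simp add: set_lebesgue_integral_def i_def S_def)
  show ?thesis unfolding eq F_def[symmetric] using absle bnd fin by linarith
qed
end
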